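(* Let $G$ be a finite group which is neither cyclic nor isomorphic to a direct product of a cyclic group of odd order and a generalized quaternion group. If $|Z(G)|$ has at least two distinct prime divisors, then the difference graph $\mathcal{D}(G)$ is connected and has diameter at most $5$.
   Context: For a finite group $G$ with identity $e$: the intersection power graph $\mathcal{G}_I(G)$ has vertex set $G$, two distinct non-identity vertices $x,y$ being adjacent iff $\langle x\rangle\cap\langle y\rangle\neq\{e\}$, and $e$ being adjacent to every other vertex. The power graph $\mathcal{P}(G)$ has vertex set $G$, two distinct vertices being adjacent iff one is a power of the other. The difference graph $\mathcal{D}(G)$ is the graph on vertex set $G$ with edge set $E(\mathcal{G}_I(G))\setminus E(\mathcal{P}(G))$, with all isolated vertices removed. $Z(G)$ denotes the center of $G$. The generalized quaternion group $Q_{2^n}$ ($n\ge 3$) is $\langle x,y\mid x^{2^{n-1}}=1,\ y^2=x^{2^{n-2}},\ y^{-1}xy=x^{-1}\rangle$. *)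

theory Defs
  imports "HOL-Algebra.Algebra"
begin

definition cyclic_group :: "('a, 'b) monoid_scheme \<Rightarrow> bool" where
  "cyclic_group G \<longleftrightarrow> (\<exists>x \<in> carrier G. generate G {x} = carrier G)"

definition grp_center :: "('a, 'b) monoid_scheme \<Rightarrow> 'a set" where
  "grp_center G = {z \<in> carrier G. \<forall>g \<in> carrier G. z \<otimes>\<^bsub>G\<^esub> g = g \<otimes>\<^bsub>G\<^esub> z}"

(* generalized quaternion group Q_{2^n}: element (i,s) stands for x^i y^s,
   0 <= i < 2^(n-1), s in {0,1}; relations x^(2^(n-1)) = 1, y^2 = x^(2^(n-2)),
   y^-1 x y = x^-1 (equivalently y x^j = x^-j y) *)
definition quaternion_group :: "nat \<Rightarrow> (int \<times> int) monoid" where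
  "quaternion_group n =
     (let N = (2::int) ^ (n - 1) in
      \<lparr>carrier = {0..<N} \<times> {0, 1},
       monoid.mult = (\<lambda>(i, s) (j, t).
          if s = 0 then ((i + j) mod N, t)
          else if t = 0 then ((i - j) mod N, 1)
          else ((i - j + 2 ^ (n - 2)) mod N, 0)),
       one = (0, 0)\<rparr>)"

definition ipg_adj :: "('a, 'b) monoid_scheme \<Rightarrow> 'a \<Rightarrow> 'a \<Rightarrow> bool" where
  "ipg_adj G x y \<longleftrightarrow> x \<in> carrier G \<and> y \<in> carrier G \<and> x \<noteq> y \<and>
     (x = \<one>\<^bsub>G\<^esub> \<or> y = \<one>\<^bsub>G\<^esub> \<or> generate G {x} \<inter> generate G {y} \<noteq> {\<one>\<^bsub>G\<^esub>})"

definition pg_adj :: "('a, 'b) monoid_scheme \<Rightarrow> 'a \<Rightarrow> 'a \<Rightarrow> bool" where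
  "pg_adj G x y \<longleftrightarrow> x \<in> carrier G \<and> y \<in> carrier G \<and> x \<noteq> y \<and>
     ((\<exists>k::nat. y = x [^]\<^bsub>G\<^esub> k) \<or> (\<exists>k::nat. x = y [^]\<^bsub>G\<^esub> k))"

definition diff_adj :: "('a, 'b) monoid_scheme \<Rightarrow> 'a \<Rightarrow> 'a \<Rightarrow> bool" where
  "diff_adj G x y \<longleftrightarrow> ipg_adj G x y \<and> \<not> pg_adj G x y"

definition diff_verts :: "('a, 'b) monoid_scheme \<Rightarrow> 'a set" where
  "diff_verts G = {x \<in> carrier G. \<exists>y. diff_adj G x y}"

definition diff_walk :: "('a, 'b) monoid_scheme \<Rightarrow> 'a list \<Rightarrow> bool" where
  "diff_walk G xs \<longleftrightarrow> xs \<noteq> [] \<and> set xs \<subseteq> diff_verts G \<and>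
     (\<forall>i. Suc i < length xs \<longrightarrow> diff_adj G (xs ! i) (xs ! Suc i))"

definition diff_connected :: "('a, 'b) monoid_scheme \<Rightarrow> bool" where
  "diff_connected G \<longleftrightarrow> diff_verts G \<noteq> {} \<and>
     (\<forall>u \<in> diff_verts G. \<forall>v \<in> diff_verts G.
        \<exists>xs. diff_walk G xs \<and> hd xs = u \<and> last xs = v)"

definition diff_diam_le :: "('a, 'b) monoid_scheme \<Rightarrow> nat \<Rightarrow> bool" where
  "diff_diam_le G d \<longleftrightarrow>
     (\<forall>u \<in> diff_verts G. \<forall>v \<in> diff_verts G.
        \<exists>xs. diff_walk G xs \<and> hd xs = u \<and> last xs = v \<and> length xs \<le> Suc d)"

end

theory Submission
  imports Defs
begin

locale fgrp = group G for G (structure) +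
  assumes fin: "finite (carrier G)"
begin

abbreviation cg where "cg x \<equiv> generate G {x}"

lemma mem_cg: "x \<in> carrier G \<Longrightarrow> y \<in> cg x \<longleftrightarrow> (\<exists>k::nat. y = x [^] k)"
  using generate_pow_on_finite_carrier[OF fin] by auto

lemma cg_carrier: "x \<in> carrier G \<Longrightarrow> y \<in> cg x \<Longrightarrow> y \<in> carrier G"
  using mem_cg by auto

lemma self_cg: "x \<in> cg x" by (rule generate.incl) simp
lemma one_cg: "\<one> \<in> cg x" by (rule generate.one)
lemma pow_cg: "x \<in> carrier G \<Longrightarrow> x [^] (k::nat) \<in> cg x" using mem_cg by auto

lemma cg_trans: "x \<in> carrier G \<Longrightarrow> y \<in> cg x \<Longrightarrow> z \<in> cg y \<Longrightarrow> z \<in> cg x"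
proof -
  assume x: "x \<in> carrier G" and y: "y \<in> cg x" and z: "z \<in> cg y"
  then obtain k where k: "y = x [^] (k::nat)" using mem_cg by auto
  have yc: "y \<in> carrier G" using x y cg_carrier by auto
  then obtain j where j: "z = y [^] (j::nat)" using mem_cg z by auto
  have "z = x [^] (k * j)" using j k x by (simp add: nat_pow_pow)
  then show ?thesis using mem_cg x by auto
qed

lemma cg_sub: "x \<in> carrier G \<Longrightarrow> subgroup (cg x) G"
  by (rule generate_is_subgroup) auto

lemma ord_dvd_mem: "x \<in> carrier G \<Longrightarrow> y \<in> cg x \<Longrightarrow> ord y dvd ord x"
proof -
  assume x: "x \<in> carrier G" and y: "y \<in> cg x"
  then obtain k where k: "y = x [^] (k::nat)" using mem_cg by auto
  have "y [^] ord x = (x [^] ord x) [^] k" using k x by (metis nat_pow_pow mult.commute)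
  also have "\<dots> = \<one>" using x by simp
  finally show ?thesis using pow_eq_id k x by simp
qed

definition pr where "pr x \<longleftrightarrow> x \<in> carrier G \<and> Factorial_Ring.prime (ord x)"

lemma pr_ne1: "pr x \<Longrightarrow> x \<noteq> \<one>"
  unfolding pr_def by auto

lemma pr_gen: assumes g: "pr g" and k: "g [^] (k::nat) \<noteq> \<one>" shows "g \<in> cg (g [^] k)"
proof -
  have gc: "g \<in> carrier G" and p: "Factorial_Ring.prime (ord g)" using g pr_def by auto
  have nd: "\<not> ord g dvd k" using k pow_eq_id gc by simp
  have k0: "k \<noteq> 0" using nd by (metis dvd_0_right)
  have "coprime (ord g) k" using p nd by (simp add: prime_imp_coprime)
  then have gcd1: "gcd k (ord g) = 1" by (simp add: coprime_iff_gcd_eq_1 gcd.commute)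
  obtain x y where xy: "k * x = ord g * y + gcd k (ord g)" using bezout_nat[OF k0] by blast
  have "(g [^] k) [^] x = g [^] (ord g * y + 1)" using xy gcd1 gc by (simp add: nat_pow_pow)
  also have "\<dots> = g [^] (ord g * y) \<otimes> g [^] (1::nat)" using gc
    by (simp add: nat_pow_mult)
  also have "g [^] (ord g * y) = \<one>" using gc by (metis nat_pow_pow pow_ord_eq_1 nat_pow_one)
  finally have "(g [^] k) [^] x = g" using gc by simp
  then have "g = (g [^] k) [^] x" by simp
  then show ?thesis using mem_cg gc by (metis nat_pow_closed)
qed

lemma pr_mem: assumes g: "pr g" and y: "y \<in> cg g" and y1: "y \<noteq> \<one>" shows "g \<in> cg y"
proof -
  have gc: "g \<in> carrier G" using g pr_def by auto
  obtain k where k: "y = g [^] (k::nat)" using mem_cg gc y by auto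
  show ?thesis using pr_gen[OF g] k y1 by simp
qed

lemma pr_mem_ord: assumes g: "pr g" and y: "y \<in> cg g" and y1: "y \<noteq> \<one>" shows "ord y = ord g"
proof -
  have gc: "g \<in> carrier G" and p: "Factorial_Ring.prime (ord g)" using g pr_def by auto
  have yc: "y \<in> carrier G" using cg_carrier gc y by auto
  have "ord y dvd ord g" using ord_dvd_mem gc y by auto
  moreover have "ord y \<noteq> 1" using ord_eq_1 yc y1 by auto
  ultimately show ?thesis using p by (metis One_nat_def prime_nat_iff)
qed

lemma pr_mem_pr: "pr g \<Longrightarrow> y \<in> cg g \<Longrightarrow> y \<noteq> \<one> \<Longrightarrow> pr y"
  using pr_mem_ord cg_carrier pr_def by auto


lemma pr_ndvd: "pr g \<Longrightarrow> pr c \<Longrightarrow> ord g \<noteq> ord c \<Longrightarrow> \<not> ord g dvd ord c"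
  unfolding pr_def using primes_dvd_imp_eq by blast

lemma pair_pow_gen:
  assumes g: "pr g" and c: "pr c" and com: "g \<otimes> c = c \<otimes> g" and ne: "ord g \<noteq> ord c"
    and gk: "g [^] (k::nat) \<noteq> \<one>"
  shows "g \<in> cg ((g \<otimes> c) [^] k)"
proof -
  have gc: "g \<in> carrier G" and cc: "c \<in> carrier G" and pg: "Factorial_Ring.prime (ord g)"
    using g c pr_def by auto
  have "(g \<otimes> c) [^] (k * ord c) = g [^] (k * ord c) \<otimes> c [^] (k * ord c)"
    using pow_mult_distrib[OF com gc cc] by simp
  also have "c [^] (k * ord c) = \<one>" using cc by (metis nat_pow_pow pow_ord_eq_1 nat_pow_one mult.commute)
  finally have e: "(g \<otimes> c) [^] (k * ord c) = g [^] (k * ord c)" using gc by simp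
  have "\<not> ord g dvd k" using gk pow_eq_id gc by simp
  moreover have "\<not> ord g dvd ord c" using pr_ndvd g c ne by auto
  ultimately have "\<not> ord g dvd k * ord c" using pg prime_dvd_mult_iff by blast
  then have "g [^] (k * ord c) \<noteq> \<one>" using pow_eq_id gc by simp
  then have "g \<in> cg (g [^] (k * ord c))" using pr_gen g by blast
  then have "g \<in> cg (((g \<otimes> c) [^] k) [^] ord c)" using e gc cc by (simp add: nat_pow_pow)
  moreover have "((g \<otimes> c) [^] k) [^] ord c \<in> cg ((g \<otimes> c) [^] k)" using gc cc pow_cg by simp
  ultimately show ?thesis using cg_trans gc cc by (meson m_closed nat_pow_closed)
qed

lemma pair_mem:
  assumes g: "pr g" and c: "pr c" and com: "g \<otimes> c = c \<otimes> g" and ne: "ord g \<noteq> ord c"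
  shows "g \<in> cg (g \<otimes> c)"
proof -
  have gc: "g \<in> carrier G" using g pr_def by auto
  have "g [^] (1::nat) \<noteq> \<one>" using pr_ne1 g gc by simp
  then show ?thesis using pair_pow_gen[OF g c com ne, of 1] gc c pr_def by simp
qed

lemma pair_mem2:
  assumes g: "pr g" and c: "pr c" and com: "g \<otimes> c = c \<otimes> g" and ne: "ord g \<noteq> ord c"
  shows "c \<in> cg (g \<otimes> c)"
  using pair_mem[OF c g com[symmetric] ne[symmetric]] com by simp

lemma pair_tri:
  assumes g: "pr g" and c: "pr c" and com: "g \<otimes> c = c \<otimes> g" and ne: "ord g \<noteq> ord c"
    and x: "x \<in> cg (g \<otimes> c)" and x1: "x \<noteq> \<one>"
  shows "x \<in> cg g \<or> x \<in> cg c \<or> (g \<in> cg x \<and> c \<in> cg x)"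
proof -
  have gc: "g \<in> carrier G" and cc: "c \<in> carrier G" using g c pr_def by auto
  obtain k where k: "x = (g \<otimes> c) [^] (k::nat)" using mem_cg x gc cc by (meson m_closed)
  have xe: "x = g [^] k \<otimes> c [^] k" using k pow_mult_distrib[OF com gc cc] by simp
  show ?thesis
  proof (cases "g [^] k = \<one>")
    case True
    then have "x = c [^] k" using xe cc by simp
    then show ?thesis using pow_cg cc by simp
  next
    case False
    note gk = False
    show ?thesis
    proof (cases "c [^] k = \<one>")
      case True
      then have "x = g [^] k" using xe gc by simp
      then show ?thesis using pow_cg gc by simp
    next
      case False
      have "g \<in> cg x" using pair_pow_gen[OF g c com ne gk] k by simp
      moreover have "c \<in> cg x" using pair_pow_gen[OF c g com[symmetric] ne[symmetric] False] k com by simp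
      ultimately show ?thesis by simp
    qed
  qed
qed

lemma pair_pr:
  assumes g: "pr g" and c: "pr c" and com: "g \<otimes> c = c \<otimes> g" and ne: "ord g \<noteq> ord c"
    and x: "x \<in> cg (g \<otimes> c)" and px: "pr x"
  shows "x \<in> cg g \<or> x \<in> cg c"
proof -
  have x1: "x \<noteq> \<one>" using pr_ne1 px by auto
  have "\<not> (g \<in> cg x \<and> c \<in> cg x)"
  proof
    assume "g \<in> cg x \<and> c \<in> cg x"
    then have "ord g = ord x" "ord c = ord x" using pr_mem_ord[OF px] pr_ne1 g c by auto
    then show False using ne by simp
  qed
  then show ?thesis using pair_tri[OF g c com ne x x1] by blast
qed

definition R where
  "R x y \<longleftrightarrow> x \<in> carrier G \<and> y \<in> carrier G \<and> (\<exists>t. t \<in> cg x \<and> t \<in> cg y \<and> t \<noteq> \<one>)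
     \<and> x \<notin> cg y \<and> y \<notin> cg x"

lemma R_sym: "R x y \<Longrightarrow> R y x" unfolding R_def by blast

definition PR where
  "PR w x y \<longleftrightarrow> pr x \<and> pr y \<and> x \<otimes> y = y \<otimes> x \<and> ord x \<noteq> ord y \<and> w = x \<otimes> y"

lemma PR_sym: "PR w x y \<Longrightarrow> PR w y x" unfolding PR_def by auto

lemma PR_carrier: "PR w x y \<Longrightarrow> w \<in> carrier G" unfolding PR_def pr_def by auto

lemma PR_mem: "PR w x y \<Longrightarrow> x \<in> cg w" unfolding PR_def using pair_mem by auto

lemma PR_pr: "PR w x y \<Longrightarrow> pr z \<Longrightarrow> z \<in> cg w \<Longrightarrow> z \<in> cg x \<or> z \<in> cg y"
  unfolding PR_def using pair_pr by auto

lemma PR_in: "PR w x y \<Longrightarrow> v \<in> carrier G \<Longrightarrow> x \<in> cg v \<Longrightarrow> y \<in> cg v \<Longrightarrow> w \<in> cg v"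
  unfolding PR_def using subgroup.m_closed[OF cg_sub] by auto

lemma midL:
  assumes p1: "PR w1 x1 y1" and p2: "PR w2 x2 y2" and i: "x2 \<in> cg w1" and ou: "y2 \<notin> cg w1"
  shows "R w1 w2"
proof -
  have c1: "w1 \<in> carrier G" and c2: "w2 \<in> carrier G" using p1 p2 PR_carrier by auto
  have x2: "x2 \<in> cg w2" "x2 \<noteq> \<one>" using PR_mem[OF p2] p2 pr_ne1 PR_def by auto
  have "w2 \<notin> cg w1" using PR_mem[OF PR_sym[OF p2]] ou cg_trans c1 by blast
  moreover have "w1 \<notin> cg w2"
  proof
    assume w: "w1 \<in> cg w2"
    have ox: "ord z = ord x2" if z: "z \<in> cg w1" "pr z" for z
    proof -
      have "z \<in> cg w2" using cg_trans[OF c2 w z(1)] .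
      then have "z \<in> cg x2 \<or> z \<in> cg y2" using PR_pr[OF p2 z(2)] by auto
      moreover have "z \<notin> cg y2"
      proof
        assume "z \<in> cg y2"
        then have "y2 \<in> cg z" using pr_mem p2 PR_def pr_ne1 z by auto
        then show False using ou cg_trans[OF c1 z(1)] by auto
      qed
      ultimately have "z \<in> cg x2" by auto
      then show ?thesis using pr_mem_ord p2 PR_def pr_ne1 z by auto
    qed
    have "ord x1 = ord x2" using ox PR_mem[OF p1] p1 PR_def by auto
    moreover have "ord y1 = ord x2" using ox PR_mem[OF PR_sym[OF p1]] p1 PR_def by auto
    ultimately show False using p1 PR_def by auto
  qed
  ultimately show ?thesis unfolding R_def using c1 c2 i x2 by blast
qed

lemma Xlem:
  assumes p1: "PR w1 g1 c1" and w2: "w2 \<in> carrier G" and x: "pr x" "x \<in> cg w1" "x \<in> cg w2"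
  shows "g1 \<in> cg w2 \<or> c1 \<in> cg w2"
proof -
  have "x \<in> cg g1 \<or> x \<in> cg c1" using PR_pr[OF p1 x(1,2)] .
  then have "g1 \<in> cg x \<or> c1 \<in> cg x" using pr_mem p1 PR_def pr_ne1 x by auto
  then show ?thesis using cg_trans[OF w2 x(3)] by auto
qed


definition Wk :: "nat \<Rightarrow> 'a \<Rightarrow> 'a \<Rightarrow> bool" where
  "Wk n x y \<longleftrightarrow> (\<exists>xs. xs \<noteq> [] \<and> hd xs = x \<and> last xs = y \<and> length xs \<le> Suc n \<and> successively R xs)"

lemma Wk_refl: "Wk n x x"
  unfolding Wk_def by (rule exI[of _ "[x]"]) auto

lemma Wk_edge: "R x y \<Longrightarrow> 1 \<le> n \<Longrightarrow> Wk n x y"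
  unfolding Wk_def by (rule exI[of _ "[x,y]"]) auto

lemma Wk_mono: "Wk m x y \<Longrightarrow> m \<le> n \<Longrightarrow> Wk n x y"
  unfolding Wk_def by fastforce

lemma Wk_sym: "Wk n x y \<Longrightarrow> Wk n y x"
proof -
  assume "Wk n x y"
  then obtain xs where xs: "xs \<noteq> []" "hd xs = x" "last xs = y" "length xs \<le> Suc n" "successively R xs"
    unfolding Wk_def by blast
  have "successively (\<lambda>x y. R y x) xs" using xs(5) R_sym
    by (metis successively_mono)
  then have "successively R (rev xs)" by simp
  moreover have "hd (rev xs) = y" "last (rev xs) = x" using xs by (auto simp: hd_rev last_rev)
  ultimately show ?thesis unfolding Wk_def using xs by (intro exI[of _ "rev xs"]) auto
qed

lemma Wk_trans: "Wk m x y \<Longrightarrow> Wk n y z \<Longrightarrow> Wk (m + n) x z"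
proof -
  assume "Wk m x y" "Wk n y z"
  then obtain xs ys where xs: "xs \<noteq> []" "hd xs = x" "last xs = y" "length xs \<le> Suc m" "successively R xs"
    and ys: "ys \<noteq> []" "hd ys = y" "last ys = z" "length ys \<le> Suc n" "successively R ys"
    unfolding Wk_def by blast
  obtain zs where zs: "ys = y # zs" using ys(1,2) by (cases ys) auto
  show ?thesis
  proof (cases "zs = []")
    case True
    then show ?thesis using xs ys zs unfolding Wk_def by (intro exI[of _ xs]) auto
  next
    case False
    have s: "successively R zs" "R y (hd zs)" using ys(5) zs False
      by (auto simp: successively_Cons neq_Nil_conv)
    have "successively R (xs @ zs)" using xs(3,5) s False xs(1)
      by (simp add: successively_append_iff)
    moreover have "last (xs @ zs) = z" using ys zs False by auto
    moreover have "hd (xs @ zs) = x" using xs by auto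
    moreover have "length (xs @ zs) \<le> Suc (m + n)" using xs ys zs by auto
    ultimately show ?thesis unfolding Wk_def using xs by (intro exI[of _ "xs @ zs"]) auto
  qed
qed

end

locale ctx = fgrp +
  fixes a b
  assumes pa: "pr a" and pb: "pr b" and ab: "ord a \<noteq> ord b"
    and za: "\<And>g. g \<in> carrier G \<Longrightarrow> a \<otimes> g = g \<otimes> a"
    and zb: "\<And>g. g \<in> carrier G \<Longrightarrow> b \<otimes> g = g \<otimes> b"
    and nc: "\<And>x. x \<in> carrier G \<Longrightarrow> cg x \<noteq> carrier G"
begin

definition H where
  "H w \<longleftrightarrow> (\<exists>g c. pr g \<and> c \<in> {a, b} \<and> ord g \<noteq> ord c \<and> w = g \<otimes> c)"

lemma central: "c \<in> {a, b} \<Longrightarrow> g \<in> carrier G \<Longrightarrow> g \<otimes> c = c \<otimes> g"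
  using za zb by auto

lemma cpr: "c \<in> {a, b} \<Longrightarrow> pr c" using pa pb by auto

lemma H_PR: "H w \<Longrightarrow> \<exists>g c. PR w g c \<and> c \<in> {a, b}"
  unfolding H_def PR_def using central cpr pr_def by metis

lemma mkPR: "pr g \<Longrightarrow> c \<in> {a, b} \<Longrightarrow> ord g \<noteq> ord c \<Longrightarrow> PR (g \<otimes> c) g c"
  unfolding PR_def using central cpr pr_def by metis

lemma PP:
  assumes h1: "H w1" and h2: "H w2"
  shows "(w1 \<in> cg w2 \<and> w2 \<in> cg w1) \<or> Wk 2 w1 w2"
proof -
  obtain g1 c1 where p1: "PR w1 g1 c1" and c1: "c1 \<in> {a, b}" using H_PR[OF h1] by blast
  obtain g2 c2 where p2: "PR w2 g2 c2" and c2: "c2 \<in> {a, b}" using H_PR[OF h2] by blast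
  have w1: "w1 \<in> carrier G" and w2: "w2 \<in> carrier G" using p1 p2 PR_carrier by auto
  have pg1: "pr g1" "pr c1" "pr g2" "pr c2" using p1 p2 PR_def by auto
  have g1w: "g1 \<in> cg w1" "c1 \<in> cg w1" using PR_mem p1 PR_mem[OF PR_sym[OF p1]] by auto
  have g2w: "g2 \<in> cg w2" "c2 \<in> cg w2" using PR_mem p2 PR_mem[OF PR_sym[OF p2]] by auto
  consider (a1) "g2 \<in> cg w1 \<and> c2 \<notin> cg w1" | (a2) "g2 \<notin> cg w1 \<and> c2 \<in> cg w1"
    | (b1) "g1 \<in> cg w2 \<and> c1 \<notin> cg w2" | (b2) "g1 \<notin> cg w2 \<and> c1 \<in> cg w2"
    | (same) "g2 \<in> cg w1 \<and> c2 \<in> cg w1 \<and> g1 \<in> cg w2 \<and> c1 \<in> cg w2"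
    | (x1) "g2 \<in> cg w1 \<and> g1 \<notin> cg w2 \<and> c1 \<notin> cg w2"
    | (x2) "g1 \<in> cg w2 \<and> g2 \<notin> cg w1 \<and> c2 \<notin> cg w1"
    | (none) "g2 \<notin> cg w1 \<and> c2 \<notin> cg w1 \<and> g1 \<notin> cg w2 \<and> c1 \<notin> cg w2"
    by blast
  then show ?thesis
  proof cases
    case a1 then show ?thesis using midL[OF p1 p2] Wk_edge by auto
  next
    case a2 then show ?thesis using midL[OF p1 PR_sym[OF p2]] Wk_edge by auto
  next
    case b1 then show ?thesis using midL[OF p2 p1] Wk_edge R_sym by auto
  next
    case b2 then show ?thesis using midL[OF p2 PR_sym[OF p1]] Wk_edge R_sym by auto
  next
    case same then show ?thesis using PR_in[OF p1 w2] PR_in[OF p2 w1] by auto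
  next
    case x1 then show ?thesis using Xlem[OF p1 w2 pg1(3)] g2w by auto
  next
    case x2 then show ?thesis using Xlem[OF p2 w1 pg1(1)] g1w by auto
  next
    case none
    have ne: "c1 \<noteq> c2" using none g1w by auto
    then have o: "ord c1 \<noteq> ord c2" using c1 c2 ab by auto
    define m where "m = c1 \<otimes> c2"
    have pm: "PR m c1 c2" using mkPR[OF pg1(2) c2 o] m_def by simp
    have pm2: "PR m c2 c1" using PR_sym[OF pm] .
    have "R w1 m" using midL[OF p1 pm] none g1w by auto
    moreover have "R w2 m" using midL[OF p2 pm2] none g2w by auto
    ultimately have "Wk (1 + 1) w1 w2" using Wk_trans Wk_edge R_sym by blast
    then show ?thesis by (simp add: numeral_2_eq_2)
  qed
qed


definition V where "V u \<longleftrightarrow> u \<in> carrier G \<and> u \<noteq> \<one> \<and> (\<forall>g. pr g \<longrightarrow> u \<notin> cg g)"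
definition full where "full u \<longleftrightarrow> (\<forall>g. pr g \<longrightarrow> g \<in> cg u)"

lemma pr_exists:
  assumes u: "u \<in> carrier G" and u1: "u \<noteq> \<one>"
  shows "\<exists>g. pr g \<and> g \<in> cg u"
proof -
  have "ord u \<noteq> 1" using ord_eq_1 u u1 by auto
  then obtain p where p: "Factorial_Ring.prime p" "p dvd ord u" using prime_factor_nat by blast
  have pos: "ord u > 0" using ord_ge_1[OF fin u] by simp
  obtain k where k: "ord u = p * k" using p(2) by blast
  have k0: "k \<noteq> 0" using pos k by auto
  have "ord (u [^] k) = ord u div k" using ord_pow[OF u _ k0] k by simp
  also have "\<dots> = p" using k k0 by simp
  finally have "pr (u [^] k)" using p(1) pr_def u by simp
  then show ?thesis using pow_cg u by blast
qed

lemma NF0: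
  assumes V: "V u" and g: "pr g" and c: "c \<in> {a, b}" and o: "ord g \<noteq> ord c"
    and m: "(g \<in> cg u \<and> c \<notin> cg u) \<or> (c \<in> cg u \<and> g \<notin> cg u)"
  shows "R u (g \<otimes> c)"
proof -
  have p: "PR (g \<otimes> c) g c" using mkPR[OF g c o] .
  have uc: "u \<in> carrier G" using V V_def by auto
  have wc: "g \<otimes> c \<in> carrier G" using PR_carrier[OF p] .
  have gw: "g \<in> cg (g \<otimes> c)" and cw: "c \<in> cg (g \<otimes> c)" using PR_mem[OF p] PR_mem[OF PR_sym[OF p]] by auto
  have pc: "pr c" using cpr c by auto
  have ne: "g \<noteq> \<one>" "c \<noteq> \<one>" using pr_ne1 g pc by auto
  have sh: "\<exists>t. t \<in> cg u \<and> t \<in> cg (g \<otimes> c) \<and> t \<noteq> \<one>" using m gw cw ne by blast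
  have n1: "g \<otimes> c \<notin> cg u" using m gw cw cg_trans[OF uc] by blast
  have n2: "u \<notin> cg (g \<otimes> c)"
  proof
    assume "u \<in> cg (g \<otimes> c)"
    then have "u \<in> cg g \<or> u \<in> cg c \<or> (g \<in> cg u \<and> c \<in> cg u)"
      using pair_tri[OF g pc central[OF c] o] V V_def pr_def g by auto
    then show False using V V_def g pc m by auto
  qed
  show ?thesis unfolding R_def using uc wc sh n1 n2 by blast
qed

lemma NF:
  assumes V: "V u" and h: "pr h" and hu: "h \<notin> cg u"
  shows "\<exists>w. H w \<and> R u w"
proof (cases "\<exists>g c. pr g \<and> g \<in> cg u \<and> c \<in> {a, b} \<and> ord g \<noteq> ord c \<and> c \<notin> cg u")
  case True
  then obtain g c where gc: "pr g" "g \<in> cg u" "c \<in> {a, b}" "ord g \<noteq> ord c" "c \<notin> cg u" by blast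
  then show ?thesis using NF0[OF V gc(1,3,4)] H_def by blast
next
  case False
  note F = False
  have uc: "u \<in> carrier G" "u \<noteq> \<one>" using V V_def by auto
  obtain g0 where g0: "pr g0" "g0 \<in> cg u" using pr_exists[OF uc] by blast
  have Fi: "\<And>g c. pr g \<Longrightarrow> g \<in> cg u \<Longrightarrow> c \<in> {a, b} \<Longrightarrow> ord g \<noteq> ord c \<Longrightarrow> c \<in> cg u"
    using F by blast
  have ab_in: "a \<in> cg u \<and> b \<in> cg u"
  proof (cases "ord g0 = ord a")
    case True
    then have "b \<in> cg u" using Fi[OF g0, of b] ab by simp
    then have "a \<in> cg u" using Fi[OF pb _, of a] ab by simp
    then show ?thesis using \<open>b \<in> cg u\<close> by simp
  next
    case False
    then have "a \<in> cg u" using Fi[OF g0, of a] by simp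
    then have "b \<in> cg u" using Fi[OF pa _, of b] ab by simp
    then show ?thesis using \<open>a \<in> cg u\<close> by simp
  qed
  obtain c where c: "c \<in> {a, b}" "ord h \<noteq> ord c"
  proof (cases "ord h = ord a")
    case True
    then show thesis using that[of b] ab by simp
  next
    case False
    then show thesis using that[of a] by simp
  qed
  have cu: "c \<in> cg u" using c(1) ab_in by auto
  have "R u (h \<otimes> c)" using NF0[OF V h c] cu hu by blast
  then show ?thesis using H_def h c by blast
qed

lemma FY:
  assumes u: "u \<in> carrier G"
  shows "\<exists>y. y \<in> carrier G \<and> y \<notin> cg u \<and> (a \<notin> cg y \<or> b \<notin> cg y)"
proof -
  have "cg u \<subseteq> carrier G" using cg_carrier u by auto
  then obtain y0 where "y0 \<in> carrier G" "y0 \<notin> cg u" using nc[OF u] by blast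
  then obtain y where y: "y \<in> carrier G" "y \<notin> cg u"
    and ymin: "\<And>z. z \<in> carrier G \<and> z \<notin> cg u \<Longrightarrow> ord y \<le> ord z"
    using ex_has_least_nat[of "\<lambda>z. z \<in> carrier G \<and> z \<notin> cg u" y0 ord] by blast
  have red: "y [^] ord c \<in> cg u" if c: "pr c" "c \<in> cg y" for c
  proof (rule ccontr)
    assume nin: "y [^] ord c \<notin> cg u"
    have d: "ord c dvd ord y" using ord_dvd_mem y c by auto
    have c2: "ord c > 1" using c pr_def prime_gt_1_nat by auto
    have pos: "ord y > 0" using ord_ge_1[OF fin y(1)] by simp
    have "ord (y [^] ord c) = ord y div ord c" using ord_pow[OF y(1) d] c2 by simp
    also have "\<dots> < ord y" using pos c2 by simp
    finally show False using ymin[of "y [^] ord c"] nin y by force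
  qed
  have "\<not> (a \<in> cg y \<and> b \<in> cg y)"
  proof
    assume abin: "a \<in> cg y \<and> b \<in> cg y"
    have ra: "y [^] ord a \<in> cg u" and rb: "y [^] ord b \<in> cg u" using red pa pb abin by auto
    have oa0: "ord a \<noteq> 0" using pa pr_def prime_gt_0_nat by (metis not_gr0)
    have "coprime (ord a) (ord b)" using pa pb ab pr_def primes_coprime by blast
    then have g1: "gcd (ord a) (ord b) = 1" by (simp add: coprime_iff_gcd_eq_1)
    obtain x z where xz: "ord a * x = ord b * z + gcd (ord a) (ord b)" using bezout_nat[OF oa0] by blast
    define A where "A = y [^] (ord a * x)"
    define B where "B = y [^] (ord b * z)"
    have Bc: "B \<in> carrier G" using B_def y by simp
    have "A = B \<otimes> y" using xz g1 y A_def B_def by (simp add: nat_pow_mult[symmetric])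
    then have yeq: "y = inv B \<otimes> A" using Bc y by (simp add: m_assoc[symmetric])
    have S: "subgroup (cg u) G" using cg_sub u .
    have "A \<in> cg u" unfolding A_def
      using cg_trans[OF u ra] pow_cg[of "y [^] ord a" x] y by (simp add: nat_pow_pow)
    moreover have "B \<in> cg u" unfolding B_def
      using cg_trans[OF u rb] pow_cg[of "y [^] ord b" z] y by (simp add: nat_pow_pow)
    ultimately have "inv B \<otimes> A \<in> cg u" using subgroup.m_inv_closed[OF S] subgroup.m_closed[OF S] by blast
    then show False using yeq y by simp
  qed
  then show ?thesis using y by blast
qed

lemma full_V: "full u \<Longrightarrow> u \<in> carrier G \<Longrightarrow> y \<in> carrier G \<Longrightarrow> y \<notin> cg u \<Longrightarrow> V y"
  unfolding V_def full_def using one_cg cg_trans by blast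

lemma FR:
  assumes f: "full u" and u: "u \<in> carrier G" and y: "y \<in> carrier G" "y \<notin> cg u"
    and m: "a \<notin> cg y \<or> b \<notin> cg y"
  shows "R u y"
proof -
  have y1: "y \<noteq> \<one>" using y one_cg by auto
  obtain t where t: "pr t" "t \<in> cg y" using pr_exists[OF y(1) y1] by blast
  have "t \<in> cg u" using f full_def t by auto
  moreover have "t \<noteq> \<one>" using pr_ne1 t by auto
  moreover have "u \<notin> cg y"
  proof
    assume "u \<in> cg y"
    then have "a \<in> cg y" "b \<in> cg y" using f full_def pa pb cg_trans[OF y(1)] by auto
    then show False using m by auto
  qed
  ultimately show ?thesis unfolding R_def using u y t by blast
qed

lemma FU:
  assumes f: "full u" and u: "u \<in> carrier G"
  shows "\<exists>y w. R u y \<and> R y w \<and> H w"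
proof -
  obtain y where y: "y \<in> carrier G" "y \<notin> cg u" and m: "a \<notin> cg y \<or> b \<notin> cg y" using FY[OF u] by blast
  have Ruy: "R u y" using FR[OF f u y m] .
  have Vy: "V y" using full_V[OF f u y] .
  have y1: "y \<noteq> \<one>" using Vy V_def by auto
  obtain t where t: "pr t" "t \<in> cg y" using pr_exists[OF y(1) y1] by blast
  have "\<exists>g c. pr g \<and> c \<in> {a, b} \<and> ord g \<noteq> ord c \<and> g \<in> cg y \<and> c \<notin> cg y"
  proof (cases "a \<in> cg y")
    case True
    then have "b \<notin> cg y" using m by simp
    then show ?thesis using True pa ab by (intro exI[of _ a] exI[of _ b]) simp
  next
    case False
    show ?thesis
    proof (cases "b \<in> cg y")
      case True
      then show ?thesis using False pb ab by (intro exI[of _ b] exI[of _ a]) simp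
    next
      case False2: False
      show ?thesis
      proof (cases "ord t = ord a")
        case True
        then show ?thesis using False2 t ab by (intro exI[of _ t] exI[of _ b]) simp
      next
        case False3: False
        then show ?thesis using False t by (intro exI[of _ t] exI[of _ a]) simp
      qed
    qed
  qed
  then obtain g c where gc: "pr g" "c \<in> {a, b}" "ord g \<noteq> ord c" "g \<in> cg y" "c \<notin> cg y" by blast
  have "R y (g \<otimes> c)" using NF0[OF Vy gc(1-3)] gc by auto
  then show ?thesis using Ruy H_def gc by blast
qed

lemma FF:
  assumes fu: "full u" and fv: "full v" and u: "u \<in> carrier G" and v: "v \<in> carrier G"
  shows "Wk 2 u v"
proof -
  have au: "a \<in> cg u" "a \<in> cg v" using fu fv full_def pa by auto
  have a1: "a \<noteq> \<one>" using pr_ne1 pa by auto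
  have two: "Wk 2 u v" if fu: "full u" and fv: "full v" and u: "u \<in> carrier G" and v: "v \<in> carrier G"
    and vu: "v \<in> cg u" for u v
  proof -
    obtain y where y: "y \<in> carrier G" "y \<notin> cg u" and m: "a \<notin> cg y \<or> b \<notin> cg y" using FY[OF u] by blast
    have "R u y" using FR[OF fu u y m] .
    moreover have "y \<notin> cg v" using y cg_trans[OF u vu] by auto
    then have "R v y" using FR[OF fv v y(1) _ m] by auto
    ultimately have "Wk (1 + 1) u v" using Wk_trans Wk_edge R_sym by blast
    then show ?thesis by (simp add: numeral_2_eq_2)
  qed
  consider "v \<in> cg u" | "u \<in> cg v" | "u \<notin> cg v \<and> v \<notin> cg u" by blast
  then show ?thesis
  proof cases
    case 1 then show ?thesis using two fu fv u v by blast
  next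
    case 2 then show ?thesis using two[OF fv fu v u] Wk_sym by blast
  next
    case 3
    then have "R u v" unfolding R_def using u v au a1 by blast
    then show ?thesis using Wk_edge by auto
  qed
qed

lemma transfer:
  assumes r: "R v w2" and m: "w1 \<in> cg w2" "w2 \<in> cg w1" and w1: "w1 \<in> carrier G"
  shows "R v w1"
proof -
  have v: "v \<in> carrier G" and w2: "w2 \<in> carrier G" using r R_def by auto
  have eq: "cg w1 = cg w2" using cg_trans[OF w1 m(2)] cg_trans[OF w2 m(1)] by blast
  have "w1 \<notin> cg v" using r R_def cg_trans[OF v _ m(2)] by blast
  then show ?thesis using r eq w1 unfolding R_def by auto
qed

lemma hub_join:
  assumes h1: "H w1" and h2: "H w2" and r1: "R x w1" and r2: "R w2 z"
  shows "Wk 4 x z"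
proof -
  have w1: "w1 \<in> carrier G" using r1 R_def by auto
  from PP[OF h1 h2] show ?thesis
  proof
    assume m: "w1 \<in> cg w2 \<and> w2 \<in> cg w1"
    have "R z w1" using transfer[OF R_sym[OF r2]] m w1 by auto
    then have "Wk (1 + 1) x z" using Wk_trans Wk_edge R_sym r1 by blast
    then show ?thesis using Wk_mono by fastforce
  next
    assume "Wk 2 w1 w2"
    then have "Wk (1 + 2 + 1) x z" using Wk_trans Wk_edge r1 r2 by blast
    then show ?thesis by (simp add: numeral_eq_Suc)
  qed
qed

lemma hubby: "V u \<Longrightarrow> \<not> full u \<Longrightarrow> \<exists>w. H w \<and> R u w"
  using NF full_def by blast

lemma mixed:
  assumes fu: "full u" and u: "u \<in> carrier G" and Vv: "V v" and nf: "\<not> full v"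
  shows "Wk 5 u v"
proof -
  obtain y w where r: "R u y" "R y w" "H w" using FU[OF fu u] by blast
  obtain w2 where w2: "H w2" "R v w2" using hubby[OF Vv nf] by blast
  have "Wk 4 y v" using hub_join[OF r(3) w2(1) r(2) R_sym[OF w2(2)]] .
  then have "Wk (1 + 4) u v" using Wk_trans Wk_edge r(1) by blast
  then show ?thesis by (simp add: numeral_eq_Suc)
qed

lemma main_dist:
  assumes Vu: "V u" and Vv: "V v"
  shows "Wk 5 u v"
proof -
  have u: "u \<in> carrier G" and v: "v \<in> carrier G" using Vu Vv V_def by auto
  show ?thesis
  proof (cases "full u")
    case True
    show ?thesis
    proof (cases "full v")
      case True
      then show ?thesis using FF[OF \<open>full u\<close> True u v] Wk_mono by fastforce
    next
      case False
      then show ?thesis using mixed[OF \<open>full u\<close> u Vv] by blast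
    qed
  next
    case False
    show ?thesis
    proof (cases "full v")
      case True
      then show ?thesis using mixed[OF True v Vu False] Wk_sym by blast
    next
      case False2: False
      obtain w1 where w1: "H w1" "R u w1" using hubby[OF Vu False] by blast
      obtain w2 where w2: "H w2" "R v w2" using hubby[OF Vv False2] by blast
      show ?thesis using hub_join[OF w1(1) w2(1) w1(2) R_sym[OF w2(2)]] Wk_mono by fastforce
    qed
  qed
qed

lemma ab_V: "V (a \<otimes> b)"
proof -
  have p: "PR (a \<otimes> b) a b" using mkPR[OF pa _ ab] by simp
  have m: "a \<in> cg (a \<otimes> b)" "b \<in> cg (a \<otimes> b)" using PR_mem[OF p] PR_mem[OF PR_sym[OF p]] by auto
  have c: "a \<otimes> b \<in> carrier G" using PR_carrier[OF p] .
  have "a \<otimes> b \<noteq> \<one>"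
  proof
    assume "a \<otimes> b = \<one>"
    then have "a \<in> cg \<one>" using m by simp
    then obtain k where "a = \<one> [^] (k::nat)" using mem_cg[of "\<one>"] by auto
    then show False using pr_ne1[OF pa] by simp
  qed
  moreover have "a \<otimes> b \<notin> cg g" if g: "pr g" for g
  proof
    assume "a \<otimes> b \<in> cg g"
    then have "a \<in> cg g" "b \<in> cg g" using m cg_trans g pr_def by blast+
    then have "ord a = ord g" "ord b = ord g" using pr_mem_ord[OF g] pr_ne1 pa pb by auto
    then show False using ab by simp
  qed
  ultimately show ?thesis using c V_def by blast
qed

lemma exists_R: "\<exists>x y. R x y"
proof (cases "full (a \<otimes> b)")
  case True
  have c: "a \<otimes> b \<in> carrier G" using ab_V V_def by auto
  then show ?thesis using FU[OF True c] by blast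
next
  case False
  then show ?thesis using hubby[OF ab_V False] by blast
qed


lemma succ_nb:
  assumes s: "successively R xs" and l: "2 \<le> length xs" and x: "x \<in> set xs"
  shows "\<exists>y. R x y"
proof -
  obtain i where i: "i < length xs" "x = xs ! i" using x by (metis in_set_conv_nth)
  show ?thesis
  proof (cases "Suc i < length xs")
    case True
    then show ?thesis using successively_nth[OF s True] i by blast
  next
    case False
    then have "Suc (i - 1) < length xs" "Suc (i - 1) = i" using i l by auto
    then show ?thesis using successively_nth[OF s, of "i - 1"] i R_sym by metis
  qed
qed

end

context ctx
begin

lemma R_diff: "R x y \<Longrightarrow> diff_adj G x y"
proof -
  assume r: "R x y"
  then have xy: "x \<in> carrier G" "y \<in> carrier G" and t: "\<exists>t. t \<in> cg x \<and> t \<in> cg y \<and> t \<noteq> \<one>"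
    and n: "x \<notin> cg y" "y \<notin> cg x" unfolding R_def by auto
  have "x \<noteq> y" using n self_cg by metis
  moreover have "generate G {x} \<inter> generate G {y} \<noteq> {\<one>}" using t by blast
  moreover have "\<not> (\<exists>k::nat. y = x [^] k)" using n pow_cg xy by auto
  moreover have "\<not> (\<exists>k::nat. x = y [^] k)" using n pow_cg xy by auto
  ultimately show ?thesis unfolding diff_adj_def ipg_adj_def pg_adj_def using xy by blast
qed

lemma vert_V: assumes "x \<in> diff_verts G" shows "V x"
proof -
  obtain y where d: "diff_adj G x y" and xc: "x \<in> carrier G" using assms unfolding diff_verts_def by auto
  have yc: "y \<in> carrier G" and ne: "x \<noteq> y" and np1: "\<not> (\<exists>k::nat. y = x [^] k)"
    and np2: "\<not> (\<exists>k::nat. x = y [^] k)"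
    using d xc unfolding diff_adj_def ipg_adj_def pg_adj_def by auto
  have x1: "x \<noteq> \<one>" using np2 by (metis nat_pow_0)
  have y1: "y \<noteq> \<one>" using np1 by (metis nat_pow_0)
  have "generate G {x} \<inter> generate G {y} \<noteq> {\<one>}"
    using d x1 y1 unfolding diff_adj_def ipg_adj_def by auto
  then obtain t where t: "t \<in> cg x" "t \<in> cg y" "t \<noteq> \<one>" using one_cg by blast
  have "x \<notin> cg g" if g: "pr g" for g
  proof
    assume xg: "x \<in> cg g"
    have gc: "g \<in> carrier G" using g pr_def by auto
    have "g \<in> cg x" using pr_mem[OF g xg x1] .
    have "t \<in> cg g" using cg_trans[OF gc xg t(1)] .
    then have "g \<in> cg t" using pr_mem[OF g _ t(3)] by auto
    then have "g \<in> cg y" using cg_trans[OF yc t(2)] by auto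
    then have "x \<in> cg y" using cg_trans[OF yc _ xg] by auto
    then show False using np2 mem_cg yc by auto
  qed
  then show ?thesis using V_def xc x1 by auto
qed

end

context ctx
begin

lemma ctx_main: "diff_connected G \<and> diff_diam_le G 5"
proof -
  have diam: "diff_diam_le G 5"
    unfolding diff_diam_le_def
  proof (intro ballI)
    fix u v assume u: "u \<in> diff_verts G" and v: "v \<in> diff_verts G"
    have "Wk 5 u v" using main_dist[OF vert_V[OF u] vert_V[OF v]] .
    then obtain xs where xs: "xs \<noteq> []" "hd xs = u" "last xs = v" "length xs \<le> Suc 5" "successively R xs"
      unfolding Wk_def by blast
    have "set xs \<subseteq> diff_verts G"
    proof
      fix x assume x: "x \<in> set xs"
      show "x \<in> diff_verts G"
      proof (cases "2 \<le> length xs")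
        case True
        then obtain y where r: "R x y" using succ_nb[OF xs(5) True x] by blast
        have "x \<in> carrier G" using r R_def by auto
        then show ?thesis using R_diff[OF r] unfolding diff_verts_def by auto
      next
        case False
        obtain z zs where zs: "xs = z # zs" using xs(1) by (cases xs) auto
        then have "zs = []" using False by (cases zs) auto
        then show ?thesis using x xs(2) u zs by auto
      qed
    qed
    moreover have "\<forall>i. Suc i < length xs \<longrightarrow> diff_adj G (xs ! i) (xs ! Suc i)"
      using xs(5) R_diff by (simp add: successively_conv_nth)
    ultimately show "\<exists>xs. diff_walk G xs \<and> hd xs = u \<and> last xs = v \<and> length xs \<le> Suc 5"
      unfolding diff_walk_def using xs by blast
  qed
  obtain x y where r: "R x y" using exists_R by blast
  have "x \<in> carrier G" using r R_def by auto
  then have "x \<in> diff_verts G" using R_diff[OF r] unfolding diff_verts_def by auto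
  then have "diff_verts G \<noteq> {}" by auto
  moreover have "\<forall>u \<in> diff_verts G. \<forall>v \<in> diff_verts G. \<exists>xs. diff_walk G xs \<and> hd xs = u \<and> last xs = v"
    using diam unfolding diff_diam_le_def by blast
  ultimately show ?thesis using diam unfolding diff_connected_def by blast
qed

end

lemma (in group) cauchy_elem:
  assumes fin: "finite (carrier G)" and p: "Factorial_Ring.prime p" and d: "p dvd order G"
  shows "\<exists>x \<in> carrier G. x \<noteq> \<one> \<and> x [^] p = \<one>"
proof -
  have "order G = p ^ 1 * (order G div p)" using d by simp
  then obtain H where H: "subgroup H G" "card H = p"
    using sylow_thm[OF p group_axioms _ fin] by (metis power_one_right)
  have "card H \<ge> 2" using H p prime_ge_2_nat by auto
  then have "H \<noteq> {\<one>}" by auto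
  moreover have "\<one> \<in> H" using H subgroup.one_closed by blast
  ultimately obtain x where x: "x \<in> H" "x \<noteq> \<one>" by blast
  have grp: "group (G\<lparr>carrier := H\<rparr>)" using subgroup_imp_group[OF H(1)] .
  have "finite H" using H p prime_gt_0_nat card_ge_0_finite by metis
  then have A: "x [^]\<^bsub>G\<lparr>carrier := H\<rparr>\<^esub> order (G\<lparr>carrier := H\<rparr>) = \<one>\<^bsub>G\<lparr>carrier := H\<rparr>\<^esub>"
    using group.pow_order_eq_1[OF grp] x by simp
  have B: "order (G\<lparr>carrier := H\<rparr>) = p" using H(2) by (simp add: order_def)
  have C: "x [^]\<^bsub>G\<lparr>carrier := H\<rparr>\<^esub> p = x [^] p" unfolding nat_pow_def by simp
  have D: "\<one>\<^bsub>G\<lparr>carrier := H\<rparr>\<^esub> = \<one>" by simp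
  have "x [^] p = \<one>" using A unfolding B C D .
  moreover have "x \<in> carrier G" using subgroup.mem_carrier[OF H(1) x(1)] .
  ultimately show ?thesis using x(2) by blast
qed

lemma (in group) center_sub: "subgroup (grp_center G) G"
proof (rule subgroupI)
  show "grp_center G \<subseteq> carrier G" unfolding grp_center_def by auto
  show "grp_center G \<noteq> {}" unfolding grp_center_def by (auto intro!: exI[of _ \<one>])
  show "inv a \<in> grp_center G" if a: "a \<in> grp_center G" for a
  proof -
    have ac: "a \<in> carrier G" and c: "\<And>g. g \<in> carrier G \<Longrightarrow> a \<otimes> g = g \<otimes> a"
      using a unfolding grp_center_def by auto
    have "inv a \<otimes> g = g \<otimes> inv a" if g: "g \<in> carrier G" for g
    proof -
      have "inv a \<otimes> g = inv a \<otimes> (g \<otimes> a) \<otimes> inv a" using ac g by (simp add: m_assoc)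
      also have "\<dots> = inv a \<otimes> (a \<otimes> g) \<otimes> inv a" using c g by simp
      also have "\<dots> = g \<otimes> inv a" using ac g by (simp add: m_assoc[symmetric])
      finally show ?thesis .
    qed
    then show ?thesis unfolding grp_center_def using ac by auto
  qed
  show "a \<otimes> b \<in> grp_center G" if a: "a \<in> grp_center G" and b: "b \<in> grp_center G" for a b
  proof -
    have ac: "a \<in> carrier G" and ca: "\<And>g. g \<in> carrier G \<Longrightarrow> a \<otimes> g = g \<otimes> a"
      using a unfolding grp_center_def by auto
    have bc: "b \<in> carrier G" and cb: "\<And>g. g \<in> carrier G \<Longrightarrow> b \<otimes> g = g \<otimes> b"
      using b unfolding grp_center_def by auto
    have "a \<otimes> b \<otimes> g = g \<otimes> (a \<otimes> b)" if g: "g \<in> carrier G" for g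
    proof -
      have "a \<otimes> b \<otimes> g = a \<otimes> (g \<otimes> b)" using ac bc g cb by (simp add: m_assoc)
      also have "\<dots> = (a \<otimes> g) \<otimes> b" using ac bc g by (simp add: m_assoc)
      also have "\<dots> = (g \<otimes> a) \<otimes> b" using ca g by simp
      also have "\<dots> = g \<otimes> (a \<otimes> b)" using ac bc g by (simp add: m_assoc)
      finally show ?thesis .
    qed
    then show ?thesis unfolding grp_center_def using ac bc by auto
  qed
qed

lemma (in group) center_elem:
  assumes fin: "finite (carrier G)" and p: "Factorial_Ring.prime p" and d: "p dvd card (grp_center G)"
  shows "\<exists>x \<in> grp_center G. ord x = p"
proof -
  have S: "subgroup (grp_center G) G" using center_sub .
  have grp: "group (G\<lparr>carrier := grp_center G\<rparr>)" using subgroup_imp_group[OF S] .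
  have "grp_center G \<subseteq> carrier G" unfolding grp_center_def by auto
  then have fz: "finite (carrier (G\<lparr>carrier := grp_center G\<rparr>))"
    using finite_subset fin by auto
  have "p dvd order (G\<lparr>carrier := grp_center G\<rparr>)" using d by (simp add: order_def)
  then obtain x where x0: "x \<in> carrier (G\<lparr>carrier := grp_center G\<rparr>)"
      "x \<noteq> \<one>\<^bsub>G\<lparr>carrier := grp_center G\<rparr>\<^esub>"
      "x [^]\<^bsub>G\<lparr>carrier := grp_center G\<rparr>\<^esub> p = \<one>\<^bsub>G\<lparr>carrier := grp_center G\<rparr>\<^esub>"
    using group.cauchy_elem[OF grp fz p] by blast
  have C: "x [^]\<^bsub>G\<lparr>carrier := grp_center G\<rparr>\<^esub> p = x [^] p" unfolding nat_pow_def by simp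
  have D: "\<one>\<^bsub>G\<lparr>carrier := grp_center G\<rparr>\<^esub> = \<one>" by simp
  have E: "carrier (G\<lparr>carrier := grp_center G\<rparr>) = grp_center G" by simp
  have x: "x \<in> grp_center G" "x \<noteq> \<one>" "x [^] p = \<one>" using x0 unfolding C D E by auto
  have xc: "x \<in> carrier G" using subgroup.mem_carrier[OF S x(1)] .

  then have "ord x dvd p" using pow_eq_id xc x(3) by simp
  moreover have "ord x \<noteq> 1" using ord_eq_1 xc x by simp
  ultimately have "ord x = p" using p by (metis One_nat_def prime_nat_iff)
  then show ?thesis using x by blast
qed

theorem theorem4p11:
  fixes G :: "('a, 'b) monoid_scheme"
  assumes "group G"
    and "finite (carrier G)"
    and "\<not> cyclic_group G"
    and "\<not> (\<exists>m n. odd m \<and> n \<ge> 3 \<and> G \<cong> (integer_mod_group m \<times>\<times> quaternion_group n))"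
    and "card {p::nat. Factorial_Ring.prime p \<and> p dvd card (grp_center G)} \<ge> 2"
  shows "diff_connected G \<and> diff_diam_le G 5"
proof -
  interpret group G by fact
  have fg: "fgrp G" unfolding fgrp_def fgrp_axioms_def using assms(1,2) by auto
  let ?P = "{p::nat. Factorial_Ring.prime p \<and> p dvd card (grp_center G)}"
  have "2 \<le> card ?P" using assms(5) .
  then have fP: "finite ?P" and neP: "?P \<noteq> {}" using card_gt_0_iff[of ?P] by auto
  then obtain p where p: "p \<in> ?P" by blast
  have "card (?P - {p}) = card ?P - 1" using p fP by simp
  then have "card (?P - {p}) > 0" using \<open>2 \<le> card ?P\<close> by simp
  then obtain q where q: "q \<in> ?P - {p}" using card_gt_0_iff[of "?P - {p}"] by blast
  have pq: "p \<in> ?P" "q \<in> ?P" "p \<noteq> q" using p q by auto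
  obtain a where a: "a \<in> grp_center G" "ord a = p" using center_elem[OF assms(2)] pq by blast
  obtain b where b: "b \<in> grp_center G" "ord b = q" using center_elem[OF assms(2)] pq by blast
  have ac: "a \<in> carrier G" and bc: "b \<in> carrier G" using a b unfolding grp_center_def by auto
  have "ctx G a b"
    unfolding ctx_def ctx_axioms_def
  proof (intro conjI allI impI)
    show "fgrp G" using fg .
    show "fgrp.pr G a" using fgrp.pr_def[OF fg] ac a pq by auto
    show "fgrp.pr G b" using fgrp.pr_def[OF fg] bc b pq by auto
    show "ord a \<noteq> ord b" using a b pq by auto
    show "\<And>g. g \<in> carrier G \<Longrightarrow> a \<otimes>\<^bsub>G\<^esub> g = g \<otimes>\<^bsub>G\<^esub> a" using a unfolding grp_center_def by auto
    show "\<And>g. g \<in> carrier G \<Longrightarrow> b \<otimes>\<^bsub>G\<^esub> g = g \<otimes>\<^bsub>G\<^esub> b" using b unfolding grp_center_def by auto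
    show "\<And>x. x \<in> carrier G \<Longrightarrow> generate G {x} \<noteq> carrier G"
      using assms(3) unfolding cyclic_group_def by auto
  qed
  then show ?thesis by (rule ctx.ctx_main)
qed

end
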